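(* Let $\mathfrak P$ be a prime ideal of $\mathcal O$ over $\mathfrak p$ and $n_\mathfrak P=\deg f_\mathfrak P$. Let $g_0=1,g_1,\dots,g_{n_\mathfrak P-1}\in A[x]$ be such that each $g_m$ is a divisor polynomial of degree $m$ of $f_\mathfrak P$ (e.g. the set ${\mathcal B}_\mathfrak P$ of the paper, built from an Okutsu frame). Then the family $\{g_0(\theta),g_1(\theta),\dots,g_{n_\mathfrak P-1}(\theta)\}\subset L$ is $w_\mathfrak P$-reduced.
   Context: Let $A$ be a Dedekind domain with fraction field $K$, $\mathfrak p$ a nonzero prime ideal of $A$ with discrete valuation $v_\mathfrak p$, $K_\mathfrak p$ the completion, $\hat A_\mathfrak p$ its valuation ring, $\hat v$ the extension of $v_\mathfrak p$ to $\overline K_\mathfrak p$. Let $f\in A[x]$ be monic irreducible separable, $\theta$ a root, $L=K(\theta)$, $\mathcal O$ the integral closure of $A$ in $L$. For a prime $\mathfrak P$ of $\mathcal O$ over $\mathfrak p$ with ramification index $e=e(\mathfrak P/\mathfrak p)$, let $v_\mathfrak P$ be its normalized discrete valuation on $L$ and $w_\mathfrak P:=v_\mathfrak P/e$; let $f_\mathfrak P$ be the corresponding monic irreducible factor of $f$ in $\hat A_\mathfrak p[x]$ and $\theta_\mathfrak P$ a root of it, so that $w_\mathfrak P(g(\theta))=\hat v(g(\theta_\mathfrak P))$ for $g\in A[x]$. For $g=\sum c_kx^k\in K_\mathfrak p[x]$, $v_0(g)=\min_k v_\mathfrak p(c_k)$. A divisor polynomial of degree $m$ ($0\le m<\deg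 f_\mathfrak P$) of $f_\mathfrak P$ is a monic $g_m\in\hat A_\mathfrak p[x]$ of degree $m$ with $\hat v(g_m(\theta_\mathfrak P))\ge\hat v(g(\theta_\mathfrak P))-v_0(g)$ for all $g\in\hat A_\mathfrak p[x]$ of degree $m$. A finite family ${\mathcal B}$ of elements of $L$ is $w$-reduced (for a map $w:L\to\mathbb Q\cup\{\infty\}$) if $w(\sum_{b\in{\mathcal B}}\lambda_b b)=\min_{b}w(\lambda_b b)$ for all $\lambda_b\in K$. *)

theory Defs
  imports "HOL-Computational_Algebra.Polynomial" "HOL-Library.Extended_Real"
begin

definition subring_set :: "'a::field set \<Rightarrow> bool" where
  "subring_set S \<longleftrightarrow> 0 \<in> S \<and> 1 \<in> S \<and>
     (\<forall>x\<in>S. \<forall>y\<in>S. x + y \<in> S \<and> x - y \<in> S \<and> x * y \<in> S)"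

definition subfield_set :: "'a::field set \<Rightarrow> bool" where
  "subfield_set S \<longleftrightarrow> subring_set S \<and> (\<forall>x\<in>S. x \<noteq> 0 \<longrightarrow> inverse x \<in> S)"

definition ideal_in :: "'a::field set \<Rightarrow> 'a set \<Rightarrow> bool" where
  "ideal_in R I \<longleftrightarrow> I \<subseteq> R \<and> 0 \<in> I \<and> (\<forall>x\<in>I. \<forall>y\<in>I. x + y \<in> I)
     \<and> (\<forall>a\<in>R. \<forall>x\<in>I. a * x \<in> I)"

definition prime_ideal_in :: "'a::field set \<Rightarrow> 'a set \<Rightarrow> bool" where
  "prime_ideal_in R I \<longleftrightarrow> ideal_in R I \<and> I \<noteq> R \<and>
     (\<forall>a\<in>R. \<forall>b\<in>R. a * b \<in> I \<longrightarrow> a \<in> I \<or> b \<in> I)"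

definition maximal_ideal_in :: "'a::field set \<Rightarrow> 'a set \<Rightarrow> bool" where
  "maximal_ideal_in R I \<longleftrightarrow> ideal_in R I \<and> I \<noteq> R \<and>
     (\<forall>J. ideal_in R J \<and> I \<subseteq> J \<longrightarrow> J = I \<or> J = R)"

definition noetherian_set :: "'a::field set \<Rightarrow> bool" where
  "noetherian_set R \<longleftrightarrow> (\<forall>C :: nat \<Rightarrow> 'a set.
     (\<forall>n. ideal_in R (C n) \<and> C n \<subseteq> C (Suc n)) \<longrightarrow> (\<exists>N. \<forall>n\<ge>N. C n = C N))"

definition integral_over :: "'a::field set \<Rightarrow> 'a \<Rightarrow> bool" where
  "integral_over R x \<longleftrightarrow> (\<exists>q. lead_coeff q = 1 \<and> set (coeffs q) \<subseteq> R \<and> poly q x = 0)"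

text \<open>Integral closure of R in the ambient field (used with ambient field L = K(theta)).\<close>
definition integral_closure :: "'a::field set \<Rightarrow> 'a set" where
  "integral_closure R = {x. integral_over R x}"

definition dedekind_domain_frac :: "'a::field set \<Rightarrow> 'a set \<Rightarrow> bool" where
  "dedekind_domain_frac A K \<longleftrightarrow> subring_set A \<and> subfield_set K \<and> A \<subseteq> K \<and>
     (\<forall>k\<in>K. \<exists>a\<in>A. \<exists>b\<in>A. b \<noteq> 0 \<and> k = a / b) \<and>
     noetherian_set A \<and>
     (\<forall>x\<in>K. integral_over A x \<longrightarrow> x \<in> A) \<and>
     (\<forall>P. prime_ideal_in A P \<and> P \<noteq> {0} \<longrightarrow> maximal_ideal_in A P)"

definition localization :: "'a::field set \<Rightarrow> 'a set \<Rightarrow> 'a set" where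
  "localization R P = {a / s | a s. a \<in> R \<and> s \<in> R - P}"

definition normalized_dv :: "'a::field set \<Rightarrow> ('a \<Rightarrow> ereal) \<Rightarrow> bool" where
  "normalized_dv S v \<longleftrightarrow>
     (\<forall>x\<in>S. v x = \<infinity> \<longleftrightarrow> x = 0) \<and>
     (\<forall>x\<in>S - {0}. \<exists>k::int. v x = ereal (of_int k)) \<and>
     (\<forall>x\<in>S. \<forall>y\<in>S. v (x * y) = v x + v y \<and> min (v x) (v y) \<le> v (x + y)) \<and>
     (\<exists>x\<in>S. v x = 1)"

definition rat_valuation :: "('a::field \<Rightarrow> ereal) \<Rightarrow> bool" where
  "rat_valuation v \<longleftrightarrow>
     (\<forall>x. v x = \<infinity> \<longleftrightarrow> x = 0) \<and>
     (\<forall>x. x \<noteq> 0 \<longrightarrow> (\<exists>q::rat. v x = ereal (of_rat q))) \<and>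
     (\<forall>x y. v (x * y) = v x + v y \<and> min (v x) (v y) \<le> v (x + y))"

text \<open>The valuation ring of v restricted to a subfield S (e.g. hat A_p inside K_p).\<close>
definition val_ring :: "'a set \<Rightarrow> ('a \<Rightarrow> ereal) \<Rightarrow> 'a set" where
  "val_ring S v = {x\<in>S. 0 \<le> v x}"

definition v0 :: "('a::zero \<Rightarrow> ereal) \<Rightarrow> 'a poly \<Rightarrow> ereal" where
  "v0 v g = Min (v ` set (coeffs g))"

definition cauchy_wrt :: "('a::field \<Rightarrow> ereal) \<Rightarrow> (nat \<Rightarrow> 'a) \<Rightarrow> bool" where
  "cauchy_wrt v s \<longleftrightarrow> (\<forall>N::int. \<exists>M. \<forall>i\<ge>M. \<forall>j\<ge>M. ereal (of_int N) \<le> v (s i - s j))"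

definition converges_wrt :: "('a::field \<Rightarrow> ereal) \<Rightarrow> (nat \<Rightarrow> 'a) \<Rightarrow> 'a \<Rightarrow> bool" where
  "converges_wrt v s c \<longleftrightarrow> (\<forall>N::int. \<exists>M. \<forall>i\<ge>M. ereal (of_int N) \<le> v (s i - c))"

text \<open>Kp (a subfield of the ambient field Omega, with valuation vhat) is the completion of
  K (embedded by emb) with respect to vp; Omega is an algebraic closure of Kp, and vhat
  extends vp.\<close>
definition completion_setup ::
  "'l::field set \<Rightarrow> ('l \<Rightarrow> ereal) \<Rightarrow> 'c::field set \<Rightarrow> ('l \<Rightarrow> 'c) \<Rightarrow> ('c \<Rightarrow> ereal) \<Rightarrow> bool" where
  "completion_setup K vp Kp emb vhat \<longleftrightarrow>
     subfield_set Kp \<and> rat_valuation vhat \<and>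
     (\<forall>a\<in>K. emb a \<in> Kp) \<and> inj_on emb K \<and> emb 0 = 0 \<and> emb 1 = 1 \<and>
     (\<forall>a\<in>K. \<forall>b\<in>K. emb (a + b) = emb a + emb b \<and> emb (a * b) = emb a * emb b) \<and>
     (\<forall>a\<in>K. vhat (emb a) = vp a) \<and>
     (\<forall>c\<in>Kp. \<forall>N::int. \<exists>a\<in>K. ereal (of_int N) \<le> vhat (c - emb a)) \<and>
     (\<forall>s. (\<forall>i. s i \<in> Kp) \<and> cauchy_wrt vhat s \<longrightarrow> (\<exists>c\<in>Kp. converges_wrt vhat s c)) \<and>
     (\<forall>q::'c poly. degree q > 0 \<longrightarrow> (\<exists>x. poly q x = 0)) \<and>
     (\<forall>x::'c. \<exists>q. q \<noteq> 0 \<and> set (coeffs q) \<subseteq> Kp \<and> poly q x = 0)"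

definition irreducible_over :: "'a::field set \<Rightarrow> 'a poly \<Rightarrow> bool" where
  "irreducible_over S p \<longleftrightarrow> set (coeffs p) \<subseteq> S \<and> degree p > 0 \<and>
     (\<forall>q r. set (coeffs q) \<subseteq> S \<and> set (coeffs r) \<subseteq> S \<and> p = q * r \<longrightarrow>
        degree q = 0 \<or> degree r = 0)"

definition divisor_polynomial ::
  "'c::field set \<Rightarrow> ('c \<Rightarrow> ereal) \<Rightarrow> 'c poly \<Rightarrow> 'c \<Rightarrow> nat \<Rightarrow> 'c poly \<Rightarrow> bool" where
  "divisor_polynomial Kp vhat fP thetaP m g \<longleftrightarrow>
     m < degree fP \<and> lead_coeff g = 1 \<and> degree g = m \<and>
     set (coeffs g) \<subseteq> val_ring Kp vhat \<and>
     (\<forall>h. h \<noteq> 0 \<and> set (coeffs h) \<subseteq> val_ring Kp vhat \<and> degree h = m \<longrightarrow>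
        vhat (poly h thetaP) - v0 vhat h \<le> vhat (poly g thetaP))"

definition w_reduced :: "('l::field \<Rightarrow> ereal) \<Rightarrow> 'l set \<Rightarrow> 'i set \<Rightarrow> ('i \<Rightarrow> 'l) \<Rightarrow> bool" where
  "w_reduced w K I b \<longleftrightarrow> (\<forall>c. (\<forall>i\<in>I. c i \<in> K) \<longrightarrow>
      w (\<Sum>i\<in>I. c i * b i) = (MIN i\<in>I. w (c i * b i)))"

end

theory Submission
  imports Defs
begin


lemma coeffs_sub_iff: "0 \<in> R \<Longrightarrow> set (coeffs p) \<subseteq> R \<longleftrightarrow> (\<forall>i. coeff p i \<in> R)"
proof -
  assume R0: "0 \<in> R"
  have "set (coeffs p) \<subseteq> R \<longleftrightarrow> range (coeff p) \<subseteq> R" using range_coeff[of p] R0 by auto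
  also have "\<dots> \<longleftrightarrow> (\<forall>i. coeff p i \<in> R)" by auto
  finally show ?thesis .
qed

lemma rv_one: assumes "rat_valuation v" shows "v 1 = 0"
proof -
  have "v (1*1) = v 1 + v 1" using assms unfolding rat_valuation_def by blast
  moreover obtain q where "v 1 = ereal (of_rat q)" using assms unfolding rat_valuation_def by fastforce
  ultimately show ?thesis by auto
qed

lemma rv_neg: assumes "rat_valuation v" shows "v (-x) = v x"
proof -
  have "v ((-1)*(-1)) = v (-1) + v (-1)" using assms unfolding rat_valuation_def by blast
  moreover obtain q where "v (-1) = ereal (of_rat q)" using assms unfolding rat_valuation_def
    by (metis neg_equal_0_iff_equal zero_neq_one)
  ultimately have "v (-1) = 0" using rv_one[OF assms] by auto
  moreover have "v ((-1) * x) = v (-1) + v x" using assms unfolding rat_valuation_def by blast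
  ultimately show ?thesis by simp
qed

lemma rv_mult: "rat_valuation v \<Longrightarrow> v (x*y) = v x + v y"
  unfolding rat_valuation_def by blast
lemma rv_add: "rat_valuation v \<Longrightarrow> min (v x) (v y) \<le> v (x+y)"
  unfolding rat_valuation_def by blast

lemma rv_strict: assumes "rat_valuation v" "v x \<noteq> v y" shows "v (x+y) = min (v x) (v y)"
proof -
  { fix x y assume l: "v x < v y"
    have "min (v (x+y)) (v (-y)) \<le> v ((x+y) + (-y))" by (rule rv_add[OF assms(1)])
    hence "min (v (x+y)) (v y) \<le> v x" using rv_neg[OF assms(1)] by simp
    hence "v (x+y) \<le> v x" using l by (auto simp: min_def split: if_splits)
    moreover have "min (v x) (v y) \<le> v (x+y)" by (rule rv_add[OF assms(1)])
    ultimately have "v (x+y) = min (v x) (v y)" using l by (auto simp: min_def) }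
  note * = this
  show ?thesis
  proof (cases "v x < v y")
    case True then show ?thesis using * by blast
  next
    case False then have "v y < v x" using assms(2) by auto
    then show ?thesis using *[of y x] by (simp add: add.commute min.commute)
  qed
qed

lemma rv_finite: "rat_valuation v \<Longrightarrow> x \<noteq> 0 \<Longrightarrow> \<exists>r::real. v x = ereal r"
  unfolding rat_valuation_def by blast

lemma vr_closed:
  assumes "rat_valuation v" "subfield_set Kp"
  shows "0 \<in> val_ring Kp v" "x \<in> val_ring Kp v \<Longrightarrow> y \<in> val_ring Kp v \<Longrightarrow> x + y \<in> val_ring Kp v"
    "x \<in> val_ring Kp v \<Longrightarrow> y \<in> val_ring Kp v \<Longrightarrow> x * y \<in> val_ring Kp v"
proof -
  have v0: "v 0 = \<infinity>" using assms(1) unfolding rat_valuation_def by blast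
  show "0 \<in> val_ring Kp v" using assms(2) v0 unfolding val_ring_def subfield_set_def subring_set_def by auto
  show "x \<in> val_ring Kp v \<Longrightarrow> y \<in> val_ring Kp v \<Longrightarrow> x + y \<in> val_ring Kp v"
    using assms(2) rv_add[OF assms(1), of x y] unfolding val_ring_def subfield_set_def subring_set_def
    by (auto intro: order.trans[rotated])
  show "x \<in> val_ring Kp v \<Longrightarrow> y \<in> val_ring Kp v \<Longrightarrow> x * y \<in> val_ring Kp v"
    using assms(2) rv_mult[OF assms(1), of x y] unfolding val_ring_def subfield_set_def subring_set_def
    by auto
qed

lemma vr_sum:
  assumes "rat_valuation v" "subfield_set Kp" "\<forall>j<(k::nat). f j \<in> val_ring Kp v"
  shows "(\<Sum>j<k. f j) \<in> val_ring Kp v"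
    using assms(3)
proof (induction k)
  case 0 then show ?case using vr_closed(1)[OF assms(1,2)] by simp
next
  case (Suc k) then show ?case using vr_closed(2)[OF assms(1,2)] by simp
qed

lemma core:
  fixes v :: "'c::field \<Rightarrow> ereal"
  assumes rv: "rat_valuation v" and sf: "subfield_set Kp"
    and G: "\<forall>j<n. lead_coeff (G j) = 1 \<and> degree (G j) = j \<and> set (coeffs (G j)) \<subseteq> val_ring Kp v \<and>
          (\<forall>h. h \<noteq> 0 \<and> set (coeffs h) \<subseteq> val_ring Kp v \<and> degree h = j \<longrightarrow>
             v (poly h t) - v0 v h \<le> v (poly (G j) t))"
    and b: "\<forall>j<n. b j \<in> val_ring Kp v"
  shows "k \<le> n \<Longrightarrow> v (\<Sum>j<k. b j * poly (G j) t) = (INF j\<in>{..<k}. v (b j * poly (G j) t))"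
proof (induction k)
  case 0
  then show ?case using rv unfolding rat_valuation_def by (simp add: top_ereal_def)
next
  case (Suc k)
  let ?R = "val_ring Kp v"
  define S where "S = (\<Sum>j<k. b j * poly (G j) t)"
  define T where "T = b k * poly (G k) t"
  have IH: "v S = (INF j\<in>{..<k}. v (b j * poly (G j) t))" using Suc unfolding S_def by simp
  have goal: "v (S + T) = min (v T) (v S)"
  proof (cases "v S = v T")
    case False then show ?thesis using rv_strict[OF rv False] by (simp add: min.commute)
  next
    case eq: True
    have ge: "min (v S) (v T) \<le> v (S+T)" by (rule rv_add[OF rv])
    have "v (S+T) \<le> v T"
    proof (rule ccontr)
      assume "\<not> v (S+T) \<le> v T"
      hence gt: "v T < v (S+T)" by simp
      hence "v T \<noteq> \<infinity>" by auto
      hence bk0: "b k \<noteq> 0" and gk0: "poly (G k) t \<noteq> 0" unfolding T_def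
        using rv unfolding rat_valuation_def by auto
      obtain rb where rb: "v (b k) = ereal rb" using rv_finite[OF rv bk0] by blast
      obtain rg where rg: "v (poly (G k) t) = ereal rg" using rv_finite[OF rv gk0] by blast
      have kn: "k < n" using Suc by simp
      define h where "h = (\<Sum>j<k. smult (b j) (G j)) + smult (b k) (G k)"
      have ph: "poly h t = S + T" unfolding h_def S_def T_def by (simp add: poly_sum)
      have low: "coeff (\<Sum>j<k. smult (b j) (G j)) i = 0" if "i \<ge> k" for i
        unfolding coeff_sum using G kn that by (auto intro!: sum.neutral coeff_eq_0)
      have ch: "coeff h i = (\<Sum>j<k. b j * coeff (G j) i) + b k * coeff (G k) i" for i
        unfolding h_def by (simp add: coeff_sum)
      have "coeff (G k) k = 1" using G kn by metis
      hence chk: "coeff h k = b k" using low[of k] unfolding h_def by simp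
      have chg: "coeff h i = 0" if "i > k" for i using low[of i] G kn that unfolding h_def
        by (auto intro: coeff_eq_0)
      have h0: "h \<noteq> 0" using chk bk0 by auto
      have dh: "degree h = k"
      proof (rule antisym)
        show "degree h \<le> k" using chg by (intro degree_le) auto
        show "k \<le> degree h" using chk bk0 by (intro le_degree) auto
      qed
      have R0: "0 \<in> ?R" by (rule vr_closed(1)[OF rv sf])
      have Gc: "coeff (G j) i \<in> ?R" if "j \<le> k" for j i
        using G kn that coeffs_sub_iff[OF R0, of "G j"] by auto
      have hR: "set (coeffs h) \<subseteq> ?R"
        unfolding coeffs_sub_iff[OF R0] ch
        using b kn Gc by (auto intro!: vr_closed[OF rv sf] vr_sum[OF rv sf])
      have div: "v (poly h t) - v0 v h \<le> v (poly (G k) t)" using G kn h0 hR dh by blast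
      have "b k \<in> set (coeffs h)" using coeff_in_coeffs[OF h0, of k] dh chk by simp
      hence v0le: "v0 v h \<le> v (b k)" unfolding v0_def by (auto intro: Min_le)
      have "v0 v h \<in> v ` set (coeffs h)" unfolding v0_def using h0 by (auto intro: Min_in)
      then obtain c where "v0 v h = v c" by auto
      hence "v0 v h \<noteq> -\<infinity>" using rv unfolding rat_valuation_def
        by (metis MInfty_neq_ereal(1) MInfty_neq_PInfty(1))
      then obtain r0 where r0: "v0 v h = ereal r0" using v0le rb by (cases "v0 v h") auto
      have vT: "v T = ereal (rb + rg)" unfolding T_def using rv_mult[OF rv] rb rg by simp
      show False
      proof (cases "v (S+T)")
        case (real r)
        then show ?thesis using div ph r0 rg gt vT v0le rb by auto
      next
        case PInf
        then show ?thesis using div ph r0 rg by auto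
      next
        case MInf
        then show ?thesis using gt by simp
      qed
    qed
    then show ?thesis using ge eq by (simp add: min_def)
  qed
  have "(\<Sum>j<Suc k. b j * poly (G j) t) = S + T" unfolding S_def T_def by simp
  moreover have "(INF j\<in>{..<Suc k}. v (b j * poly (G j) t)) = min (v T) (v S)"
    unfolding IH T_def lessThan_Suc by (simp add: inf_min)
  ultimately show ?case using goal by simp
qed


lemma ring_sum_closed:
  assumes "subring_set A" "finite I" "\<forall>i\<in>I. f i \<in> A" shows "sum f I \<in> A"
  using assms(2,3) by (induction I rule: finite_induct) (use assms(1) in \<open>auto simp: subring_set_def\<close>)

lemma ring_prod_closed:
  assumes "subring_set A" "finite I" "\<forall>i\<in>I. f i \<in> A" shows "prod f I \<in> A"
  using assms(2,3) by (induction I rule: finite_induct) (use assms(1) in \<open>auto simp: subring_set_def\<close>)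

lemma map_poly_hom_add:
  assumes "emb 0 = 0" "\<forall>a\<in>K. \<forall>b\<in>K. emb (a + b) = emb a + emb b"
    "\<forall>i. coeff p i \<in> K" "\<forall>i. coeff q i \<in> K"
  shows "map_poly emb (p + q) = map_poly emb p + map_poly emb q"
  by (rule poly_eqI) (simp add: coeff_map_poly assms)

lemma map_poly_hom_smult:
  assumes "emb 0 = 0" "\<forall>a\<in>K. \<forall>b\<in>K. emb (a * b) = emb a * emb b"
    "a \<in> K" "\<forall>i. coeff p i \<in> K"
  shows "map_poly emb (smult a p) = smult (emb a) (map_poly emb p)"
  by (rule poly_eqI) (simp add: coeff_map_poly assms)

theorem mainTheorem2:
  fixes A K :: "'l::field set"
    and f :: "'l poly" and \<theta> :: 'l
    and p :: "'l set" and vp :: "'l \<Rightarrow> ereal"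
    and P :: "'l set" and vP :: "'l \<Rightarrow> ereal" and e :: nat and wP :: "'l \<Rightarrow> ereal"
    and Kp :: "'c::field set" and emb :: "'l \<Rightarrow> 'c" and vhat :: "'c \<Rightarrow> ereal"
    and fP :: "'c poly" and \<theta>P :: 'c
    and g :: "nat \<Rightarrow> 'l poly"
  assumes ded: "dedekind_domain_frac A K"
    and f_monic: "lead_coeff f = 1" and f_A: "set (coeffs f) \<subseteq> A"
    and f_irr: "irreducible_over K f" and f_sep: "coprime f (pderiv f)"
    and f_root: "poly f \<theta> = 0"
    and L_gen: "\<forall>y. \<exists>h. set (coeffs h) \<subseteq> K \<and> y = poly h \<theta>"
    and p_prime: "prime_ideal_in A p" and p_nz: "p \<noteq> {0}"
    and vp_dv: "normalized_dv K vp" and vp_ring: "val_ring K vp = localization A p"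
    and P_prime: "prime_ideal_in (integral_closure A) P" and P_over: "P \<inter> A = p"
    and vP_dv: "normalized_dv UNIV vP"
    and vP_ring: "{y. 0 \<le> vP y} = localization (integral_closure A) P"
    and e_pos: "e > 0" and e_ram: "\<forall>a\<in>K. vP a = ereal (real e) * vp a"
    and wP_def: "\<forall>y. wP y = vP y / ereal (real e)"
    and compl: "completion_setup K vp Kp emb vhat"
    and fP_monic: "lead_coeff fP = 1"
    and fP_int: "set (coeffs fP) \<subseteq> val_ring Kp vhat"
    and fP_irr: "irreducible_over Kp fP"
    and fP_dvd: "fP dvd map_poly emb f"
    and \<theta>P_root: "poly fP \<theta>P = 0"
    and fP_corr: "\<forall>h. set (coeffs h) \<subseteq> A \<longrightarrow> wP (poly h \<theta>) = vhat (poly (map_poly emb h) \<theta>P)"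
    and g0: "g 0 = 1"
    and g_A: "\<forall>m<degree fP. set (coeffs (g m)) \<subseteq> A"
    and g_div: "\<forall>m<degree fP. divisor_polynomial Kp vhat fP \<theta>P m (map_poly emb (g m))"
  shows "w_reduced wP K {..<degree fP} (\<lambda>m. poly (g m) \<theta>)"

proof -
  let ?n = "degree fP"
  define G where "G m = map_poly emb (g m)" for m
  define y where "y m = poly (g m) \<theta>" for m
  have sA: "subring_set A" and sK: "subfield_set K" and AK: "A \<subseteq> K"
    and frac: "\<forall>k\<in>K. \<exists>a\<in>A. \<exists>b\<in>A. b \<noteq> 0 \<and> k = a / b"
    using ded unfolding dedekind_domain_frac_def by auto
  have A0: "0 \<in> A" and A1: "1 \<in> A" using sA unfolding subring_set_def by auto
  have K0: "0 \<in> K" using sK unfolding subfield_set_def subring_set_def by auto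
  have Aplus: "x + z \<in> A" "x * z \<in> A" if "x \<in> A" "z \<in> A" for x z
    using sA that unfolding subring_set_def by auto
  have sKp: "subfield_set Kp" and rv: "rat_valuation vhat" and embK: "\<forall>a\<in>K. emb a \<in> Kp"
    and emb0: "emb 0 = 0" and embadd: "\<forall>a\<in>K. \<forall>b\<in>K. emb (a + b) = emb a + emb b"
    and embmul: "\<forall>a\<in>K. \<forall>b\<in>K. emb (a * b) = emb a * emb b"
    and embv: "\<forall>a\<in>K. vhat (emb a) = vp a"
    using compl unfolding completion_setup_def by auto
  have npos: "?n > 0" using fP_irr unfolding irreducible_over_def by auto
  have pne: "1 \<notin> p"
  proof
    assume "1 \<in> p"
    hence "A \<subseteq> p" using p_prime unfolding prime_ideal_in_def ideal_in_def by (metis mult.right_neutral subsetI)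
    thus False using p_prime unfolding prime_ideal_in_def ideal_in_def by auto
  qed
  have Aint: "0 \<le> vp a" if "a \<in> A" for a
  proof -
    have "a \<in> localization A p" unfolding localization_def using that A1 pne by force
    thus ?thesis using vp_ring unfolding val_ring_def by auto
  qed
  have bR: "emb a \<in> val_ring Kp vhat" if "a \<in> A" for a
    using that AK embK embv Aint unfolding val_ring_def by auto
  have gK: "\<forall>i. coeff (g m) i \<in> K" if "m < ?n" for m
    using g_A that coeffs_sub_iff[OF A0, of "g m"] AK by auto
  have Aver: "wP (\<Sum>i<?n. a i * y i) = (INF i\<in>{..<?n}. wP (a i * y i))"
    if aA: "\<forall>i<?n. a i \<in> A" for a
  proof -
    define H where "H k = (\<Sum>i<k. smult (a i) (g i))" for k
    have HA: "\<forall>j. coeff (H k) j \<in> A" if "k \<le> ?n" for k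
      unfolding H_def coeff_sum coeff_smult using that aA g_A
      by (auto intro!: ring_sum_closed[OF sA] Aplus simp: coeffs_sub_iff[OF A0])
    have Hmap: "map_poly emb (H k) = (\<Sum>i<k. smult (emb (a i)) (G i))" if "k \<le> ?n" for k
      using that
    proof (induction k)
      case 0 then show ?case unfolding H_def by simp
    next
      case (Suc k)
      have "H (Suc k) = H k + smult (a k) (g k)" unfolding H_def by simp
      moreover have "\<forall>j. coeff (smult (a k) (g k)) j \<in> K"
      proof
        fix j
        have "a k \<in> K" using aA Suc.prems AK by auto
        moreover have "coeff (g k) j \<in> K" using gK[of k] Suc.prems by auto
        ultimately show "coeff (smult (a k) (g k)) j \<in> K"
          using sK unfolding subfield_set_def subring_set_def by simp
      qed
      moreover have "\<forall>j. coeff (H k) j \<in> K" using HA[of k] Suc.prems AK by auto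
      ultimately have "map_poly emb (H (Suc k)) = map_poly emb (H k) + map_poly emb (smult (a k) (g k))"
        using map_poly_hom_add[OF emb0 embadd] by metis
      also have "map_poly emb (smult (a k) (g k)) = smult (emb (a k)) (G k)"
        unfolding G_def
      proof (rule map_poly_hom_smult[OF emb0 embmul])
        show "a k \<in> K" using aA Suc.prems AK by auto
        show "\<forall>i. coeff (g k) i \<in> K" using gK[of k] Suc.prems by auto
      qed
      finally show ?case using Suc by simp
    qed
    have sing: "wP (a i * y i) = vhat (emb (a i) * poly (G i) \<theta>P)" if "i < ?n" for i
    proof -
      have "wP (a i * y i) = wP (poly (smult (a i) (g i)) \<theta>)" unfolding y_def by simp
      also have "\<dots> = vhat (poly (map_poly emb (smult (a i) (g i))) \<theta>P)"
      proof (rule fP_corr[rule_format])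
        have "\<forall>j. coeff (smult (a i) (g i)) j \<in> A"
          using g_A that aA by (auto simp: coeffs_sub_iff[OF A0] Aplus)
        thus "set (coeffs (smult (a i) (g i))) \<subseteq> A" by (simp add: coeffs_sub_iff[OF A0])
      qed
      also have "map_poly emb (smult (a i) (g i)) = smult (emb (a i)) (G i)"
        unfolding G_def
      proof (rule map_poly_hom_smult[OF emb0 embmul])
        show "a i \<in> K" using aA that AK by auto
        show "\<forall>j. coeff (g i) j \<in> K" using gK[of i] that by auto
      qed
      finally show ?thesis by simp
    qed
    have "wP (\<Sum>i<?n. a i * y i) = wP (poly (H ?n) \<theta>)" unfolding H_def y_def by (simp add: poly_sum)
    also have "\<dots> = vhat (poly (map_poly emb (H ?n)) \<theta>P)"
      using HA[of ?n] by (intro fP_corr[rule_format]) (simp add: coeffs_sub_iff[OF A0])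
    also have "\<dots> = vhat (\<Sum>i<?n. emb (a i) * poly (G i) \<theta>P)" using Hmap[of ?n] by (simp add: poly_sum)
    also have "\<dots> = (INF i\<in>{..<?n}. vhat (emb (a i) * poly (G i) \<theta>P))"
    proof (rule core[OF rv sKp, where n="?n" and G=G and b="\<lambda>i. emb (a i)" and t="\<theta>P" and k="?n"])
      show "\<forall>j<?n. lead_coeff (G j) = 1 \<and> degree (G j) = j \<and> set (coeffs (G j)) \<subseteq> val_ring Kp vhat \<and>
          (\<forall>h. h \<noteq> 0 \<and> set (coeffs h) \<subseteq> val_ring Kp vhat \<and> degree h = j \<longrightarrow>
             vhat (poly h \<theta>P) - v0 vhat h \<le> vhat (poly (G j) \<theta>P))"
        using g_div unfolding G_def divisor_polynomial_def by blast
      show "\<forall>j<?n. emb (a j) \<in> val_ring Kp vhat" using aA bR by auto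
    qed simp
    also have "\<dots> = (INF i\<in>{..<?n}. wP (a i * y i))" using sing by (intro INF_cong) auto
    finally show ?thesis .
  qed
  have vPmul: "vP (x * z) = vP x + vP z" for x z using vP_dv unfolding normalized_dv_def by blast
  have vPfin: "\<exists>r::real. vP x = ereal r" if "x \<noteq> 0" for x
    using vP_dv that unfolding normalized_dv_def by blast
  have vPinf: "vP x = \<infinity>" if "x = 0" for x using vP_dv that unfolding normalized_dv_def by blast
  have vPnm: "vP x \<noteq> -\<infinity>" for x using vPfin[of x] vPinf[of x] by (cases "x = 0") auto
  have wPmul: "wP (d * x) = wP d + wP x" if dnz: "d \<noteq> 0" for d x
  proof -
    obtain rd where rd: "vP d = ereal rd" using vPfin[OF dnz] by blast
    show ?thesis
    proof (cases "vP x")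
      case (real r) then show ?thesis using rd e_pos wP_def vPmul[of d x] by (simp add: add_divide_distrib)
    next
      case PInf then show ?thesis using rd e_pos wP_def vPmul[of d x] by simp
    next
      case MInf then show ?thesis using vPnm by simp
    qed
  qed
  have wPfin: "\<exists>r::real. wP d = ereal r" if "d \<noteq> 0" for d
    using vPfin[of d] that wP_def e_pos by auto
  show ?thesis unfolding w_reduced_def
  proof (intro allI impI)
    fix c assume cK: "\<forall>i\<in>{..<?n}. c i \<in> K"
    have "\<forall>i. \<exists>na nb. i < ?n \<longrightarrow> na \<in> A \<and> nb \<in> A \<and> nb \<noteq> 0 \<and> c i = na / nb"
    proof (intro allI)
      fix i show "\<exists>na nb. i < ?n \<longrightarrow> na \<in> A \<and> nb \<in> A \<and> nb \<noteq> 0 \<and> c i = na / nb"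
      proof (cases "i < ?n")
        case True then have "c i \<in> K" using cK by auto
        then obtain na nb where "na \<in> A" "nb \<in> A" "nb \<noteq> 0" "c i = na / nb" using frac by blast
        then show ?thesis by blast
      qed auto
    qed
    then obtain na nb where nab: "\<And>i. i < ?n \<Longrightarrow> na i \<in> A \<and> nb i \<in> A \<and> nb i \<noteq> 0 \<and> c i = na i / nb i"
      by metis
    define d where "d = (\<Prod>i<?n. nb i)"
    have d0: "d \<noteq> 0" unfolding d_def using nab by auto
    have dc: "d * c i \<in> A" if "i < ?n" for i
    proof -
      have "d = nb i * (\<Prod>j\<in>{..<?n} - {i}. nb j)" unfolding d_def using that
        by (simp add: prod.remove)
      hence "d * c i = na i * (\<Prod>j\<in>{..<?n} - {i}. nb j)" using nab[OF that] by simp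
      moreover have "(\<Prod>j\<in>{..<?n} - {i}. nb j) \<in> A" using nab by (intro ring_prod_closed[OF sA]) auto
      ultimately show ?thesis using nab[OF that] Aplus by auto
    qed
    obtain rd where rd: "wP d = ereal rd" using wPfin[OF d0] by blast
    have "wP d + wP (\<Sum>i<?n. c i * y i) = wP (\<Sum>i<?n. (d * c i) * y i)"
      using wPmul[OF d0, of "\<Sum>i<?n. c i * y i"] by (simp add: sum_distrib_left mult.assoc)
    also have "\<dots> = (INF i\<in>{..<?n}. wP ((d * c i) * y i))" using Aver[of "\<lambda>i. d * c i"] dc by auto
    also have "\<dots> = (MIN i\<in>{..<?n}. wP ((d * c i) * y i))" using npos by (subst Min_Inf) auto
    also have "\<dots> = (MIN i\<in>{..<?n}. wP d + wP (c i * y i))" using wPmul[OF d0] by (simp add: mult.assoc)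
    also have "\<dots> = wP d + (MIN i\<in>{..<?n}. wP (c i * y i))"
    proof -
      have m: "mono (\<lambda>x::ereal. wP d + x)" by (auto simp: mono_def add_left_mono)
      show ?thesis using mono_Min_commute[OF m, of "(\<lambda>i. wP (c i * y i)) ` {..<?n}"] npos
        by (simp add: image_comp o_def) (metis lessThan_empty_iff less_nat_zero_code)
    qed
    finally have "ereal rd + wP (\<Sum>i<?n. c i * y i) = ereal rd + (MIN i\<in>{..<?n}. wP (c i * y i))"
      using rd by simp
    thus "wP (\<Sum>i<?n. c i * poly (g i) \<theta>) = (MIN i\<in>{..<?n}. wP (c i * poly (g i) \<theta>))"
      unfolding y_def using ereal_add_cancel_left[of "ereal rd"] by simp
  qed
qed

end
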